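(* The function $$v(x)=\alpha\,\frac{\langle x,b_0^\star\rangle^{1-\gamma}}{1-\gamma},\qquad x\in X^{b_0^\star}_{++},\qquad \alpha=\gamma^\gamma\left(\frac{\int_Df(\theta)^{1/\gamma}(\eta(\theta)b_0^\star(\theta))^{\frac{\gamma-1}{\gamma}}\mu(d\theta)}{\rho-\lambda_0^\star(1-\gamma)}\right)^{\gamma},$$ is a classical solution on $X^{b_0^\star}_{++}$ of the HJB equation $\rho v(x)=\langle x,L^\star\nabla v(x)\rangle+\mathcal H(\nabla v(x))$.
   Context: $X$ is either $L^p(D,\mu)$, $p\in[1,\infty)$, $\mu$ $\sigma$-finite, or $C(D)$ (sup-norm, pointwise order) for a compact metric space $D$ with a Borel measure $\mu$. $X^\star$ is the dual, $\langle\cdot,\cdot\rangle$ the pairing, ordered by $\varphi^\star\ge0$ iff $\langle f,\varphi^\star\rangle\ge0$ for all $f\ge0$; $X^\star_{++}=\{\varphi^\star:\langle f,\varphi^\star\rangle>0$ for all $0\neq f\ge0\}$, $X_{++}=\{f:\langle f,\varphi^\star\rangle>0$ for all $0\ne\varphi^\star\ge0\}$, $X^{\varphi^\star}_{++}=\{f:\langle f,\varphi^\star\rangle>0\}$, $X_+$ the nonnegative cone. $L:D(L)\subseteq X\to X$ is closed, densely defined, generates a $C_0$-semigroup with $e^{tL}(X_{++})\subseteq X_{++}$; $L^\star$ is its adjoint. $(Nz)(\theta)=\eta(\theta)z(\theta)$, $\mathcal U(z)=\int_D\frac{z(\theta)^{1-\gamma}}{1-\gamma}f(\theta)\mu(d\theta)$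 for $z\in X_+$, with $\eta,f:D\to(0,\infty)$ measurable, $\gamma\in(0,1)\cup(1,\infty)$, $\rho>0$. $\mathcal H(q^\star)=\sup_{z\in X_+}\{\mathcal U(z)-\langle Nz,q^\star\rangle\}$. Assumptions: (i) there is $b_0^\star\in X^\star_{++}\cap D(L^\star)$ and $\lambda_0^\star\in\mathbb R$ with $L^\star b_0^\star=\lambda_0^\star b_0^\star$; (ii) $\rho>\lambda_0^\star(1-\gamma)$; (iii) if $\gamma>1$, $(b_0^\star)^{1-\gamma}/f\in L^\infty(D,\mu)$; (iv) if $X=C(D)$, the measure $b_0^\star$ is absolutely continuous w.r.t. $\mu$ with density (also denoted $b_0^\star$), and $b_0^\star,\eta,f\in C(D;(0,\infty))$; (v) if $X=L^p$, $\eta,f\in L^\infty(D,\mu;(0,\infty))$ and $\int_Df^{1/\gamma}(\eta b_0^\star)^{\frac{\gamma-1}{\gamma}}d\mu<\infty$, $\int_D(f/(\eta b_0^\star))^{p/\gamma}d\mu<\infty$. A classical solution on $X^{b_0^\star}_{++}$ is a Fréchet $C^1$ function $v$ there with $\nabla v\in C(X^{b_0^\star}_{++};D(L^\star))$ satisfying the equation at every point. *)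

theory Defs
  imports "HOL-Analysis.Analysis"
begin

text \<open>The state space X is an abstract real Banach space 'x together with a representation map
  E : X \<rightarrow> (D \<rightarrow> R) which identifies X isometrically and linearly with L^p(D,mu)
  (elements up to mu-a.e. equality) or with C(D) (sup-norm).  The flag isC selects the case.\<close>

definition Lp_model :: "real \<Rightarrow> 'd measure \<Rightarrow> ('x::banach \<Rightarrow> 'd \<Rightarrow> real) \<Rightarrow> bool" where
  "Lp_model p \<mu> E \<longleftrightarrow>
     p \<ge> 1 \<and> sigma_finite_measure \<mu> \<and>
     (\<forall>x. E x \<in> borel_measurable \<mu> \<and> integrable \<mu> (\<lambda>\<theta>. \<bar>E x \<theta>\<bar> powr p)) \<and>
     (\<forall>x. norm x = (\<integral>\<theta>. \<bar>E x \<theta>\<bar> powr p \<partial>\<mu>) powr (1/p)) \<and>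
     (\<forall>x y. AE \<theta> in \<mu>. E (x + y) \<theta> = E x \<theta> + E y \<theta>) \<and>
     (\<forall>c x. AE \<theta> in \<mu>. E (c *\<^sub>R x) \<theta> = c * E x \<theta>) \<and>
     (\<forall>g \<in> borel_measurable \<mu>. integrable \<mu> (\<lambda>\<theta>. \<bar>g \<theta>\<bar> powr p) \<longrightarrow>
        (\<exists>x. AE \<theta> in \<mu>. E x \<theta> = g \<theta>))"

definition C_model :: "('d::metric_space) measure \<Rightarrow> ('x::banach \<Rightarrow> 'd \<Rightarrow> real) \<Rightarrow> bool" where
  "C_model \<mu> E \<longleftrightarrow>
     compact (space \<mu>) \<and> sets \<mu> = sets (restrict_space borel (space \<mu>)) \<and>
     (\<forall>x. continuous_on (space \<mu>) (E x)) \<and>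
     (\<forall>x. norm x = (if space \<mu> = {} then 0 else (SUP \<theta>\<in>space \<mu>. \<bar>E x \<theta>\<bar>))) \<and>
     (\<forall>x y. \<forall>\<theta>\<in>space \<mu>. E (x + y) \<theta> = E x \<theta> + E y \<theta>) \<and>
     (\<forall>c x. \<forall>\<theta>\<in>space \<mu>. E (c *\<^sub>R x) \<theta> = c * E x \<theta>) \<and>
     (\<forall>g. continuous_on (space \<mu>) g \<longrightarrow> (\<exists>x. \<forall>\<theta>\<in>space \<mu>. E x \<theta> = g \<theta>))"

definition agree :: "bool \<Rightarrow> 'd measure \<Rightarrow> ('d \<Rightarrow> real) \<Rightarrow> ('d \<Rightarrow> real) \<Rightarrow> bool" where
  "agree isC \<mu> g h \<longleftrightarrow>
     (if isC then (\<forall>\<theta>\<in>space \<mu>. g \<theta> = h \<theta>) else (AE \<theta> in \<mu>. g \<theta> = h \<theta>))"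

definition Xnonneg :: "bool \<Rightarrow> 'd measure \<Rightarrow> ('x \<Rightarrow> 'd \<Rightarrow> real) \<Rightarrow> 'x \<Rightarrow> bool" where
  "Xnonneg isC \<mu> E x \<longleftrightarrow>
     (if isC then (\<forall>\<theta>\<in>space \<mu>. E x \<theta> \<ge> 0) else (AE \<theta> in \<mu>. E x \<theta> \<ge> 0))"

definition dual_nonneg :: "bool \<Rightarrow> 'd measure \<Rightarrow> ('x::real_normed_vector \<Rightarrow> 'd \<Rightarrow> real)
    \<Rightarrow> ('x \<Rightarrow>\<^sub>L real) \<Rightarrow> bool" where
  "dual_nonneg isC \<mu> E \<phi> \<longleftrightarrow> (\<forall>f. Xnonneg isC \<mu> E f \<longrightarrow> blinfun_apply \<phi> f \<ge> 0)"

definition Xstar_pp :: "bool \<Rightarrow> 'd measure \<Rightarrow> ('x::real_normed_vector \<Rightarrow> 'd \<Rightarrow> real)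
    \<Rightarrow> ('x \<Rightarrow>\<^sub>L real) set" where
  "Xstar_pp isC \<mu> E = {\<phi>. \<forall>f. f \<noteq> 0 \<and> Xnonneg isC \<mu> E f \<longrightarrow> blinfun_apply \<phi> f > 0}"

definition X_pp :: "bool \<Rightarrow> 'd measure \<Rightarrow> ('x::real_normed_vector \<Rightarrow> 'd \<Rightarrow> real) \<Rightarrow> 'x set" where
  "X_pp isC \<mu> E = {f. \<forall>\<phi>. \<phi> \<noteq> 0 \<and> dual_nonneg isC \<mu> E \<phi> \<longrightarrow> blinfun_apply \<phi> f > 0}"

definition C0_semigroup :: "(real \<Rightarrow> ('x::real_normed_vector \<Rightarrow>\<^sub>L 'x)) \<Rightarrow> bool" where
  "C0_semigroup T \<longleftrightarrow> T 0 = id_blinfun \<and>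
     (\<forall>s\<ge>0. \<forall>t\<ge>0. T (s + t) = T s o\<^sub>L T t) \<and>
     (\<forall>x. ((\<lambda>t. blinfun_apply (T t) x) \<longlongrightarrow> x) (at_right 0))"

definition is_generator :: "(real \<Rightarrow> ('x::real_normed_vector \<Rightarrow>\<^sub>L 'x)) \<Rightarrow> 'x set \<Rightarrow> ('x \<Rightarrow> 'x) \<Rightarrow> bool" where
  "is_generator T DL L \<longleftrightarrow>
     DL = {x. \<exists>y. ((\<lambda>h. (blinfun_apply (T h) x - x) /\<^sub>R h) \<longlongrightarrow> y) (at_right 0)} \<and>
     (\<forall>x\<in>DL. ((\<lambda>h. (blinfun_apply (T h) x - x) /\<^sub>R h) \<longlongrightarrow> L x) (at_right 0))"

definition adj_dom :: "'x set \<Rightarrow> ('x \<Rightarrow> 'x) \<Rightarrow> ('x::real_normed_vector \<Rightarrow>\<^sub>L real) set" where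
  "adj_dom DL L = {\<phi>. \<exists>\<psi>::'x \<Rightarrow>\<^sub>L real. \<forall>x\<in>DL. blinfun_apply \<phi> (L x) = blinfun_apply \<psi> x}"

definition adj_op :: "'x set \<Rightarrow> ('x \<Rightarrow> 'x) \<Rightarrow> ('x::real_normed_vector \<Rightarrow>\<^sub>L real) \<Rightarrow> ('x \<Rightarrow>\<^sub>L real)" where
  "adj_op DL L \<phi> = (THE \<psi>. \<forall>x\<in>DL. blinfun_apply \<phi> (L x) = blinfun_apply \<psi> x)"

definition Nop :: "bool \<Rightarrow> 'd measure \<Rightarrow> ('x \<Rightarrow> 'd \<Rightarrow> real) \<Rightarrow> ('d \<Rightarrow> real) \<Rightarrow> 'x \<Rightarrow> 'x" where
  "Nop isC \<mu> E \<eta> z = (SOME y. agree isC \<mu> (E y) (\<lambda>\<theta>. \<eta> \<theta> * E z \<theta>))"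

text \<open>Utility U(z) = int z^(1-gamma)/(1-gamma) f dmu, extended-real valued
  (possibly +infinity if gamma<1, possibly -infinity if gamma>1; z^(1-gamma) = +infinity where z = 0, gamma>1).\<close>
definition Uop :: "real \<Rightarrow> 'd measure \<Rightarrow> ('x \<Rightarrow> 'd \<Rightarrow> real) \<Rightarrow> ('d \<Rightarrow> real) \<Rightarrow> 'x \<Rightarrow> ereal" where
  "Uop \<gamma> \<mu> E f z =
     (if \<gamma> < 1
      then enn2ereal (\<integral>\<^sup>+\<theta>. ennreal (E z \<theta> powr (1 - \<gamma>) * f \<theta> / (1 - \<gamma>)) \<partial>\<mu>)
      else - enn2ereal (\<integral>\<^sup>+\<theta>. (if E z \<theta> > 0 then ennreal (E z \<theta> powr (1 - \<gamma>) * f \<theta> / (\<gamma> - 1))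
                                 else \<infinity>) \<partial>\<mu>))"

definition Hop :: "bool \<Rightarrow> 'd measure \<Rightarrow> ('x::real_normed_vector \<Rightarrow> 'd \<Rightarrow> real) \<Rightarrow> real
    \<Rightarrow> ('d \<Rightarrow> real) \<Rightarrow> ('d \<Rightarrow> real) \<Rightarrow> ('x \<Rightarrow>\<^sub>L real) \<Rightarrow> ereal" where
  "Hop isC \<mu> E \<gamma> f \<eta> q =
     (SUP z \<in> {z. Xnonneg isC \<mu> E z}. Uop \<gamma> \<mu> E f z - ereal (blinfun_apply q (Nop isC \<mu> E \<eta> z)))"

text \<open>Classical solution on an open set S of rho v(x) = <x, L* grad v(x)> + H(grad v(x)):
  v Frechet C^1 on S with gradient in D(L*), continuous into D(L*) with the graph norm,
  and the equation holds at every point of S.\<close>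
definition HJB_classical_solution :: "'x set \<Rightarrow> ('x::real_normed_vector \<Rightarrow> real) \<Rightarrow> real
    \<Rightarrow> ('x \<Rightarrow>\<^sub>L real) set \<Rightarrow> (('x \<Rightarrow>\<^sub>L real) \<Rightarrow> ('x \<Rightarrow>\<^sub>L real)) \<Rightarrow> (('x \<Rightarrow>\<^sub>L real) \<Rightarrow> ereal) \<Rightarrow> bool" where
  "HJB_classical_solution S v \<rho> DLs Ls H \<longleftrightarrow> open S \<and>
     (\<exists>v'. (\<forall>x\<in>S. (v has_derivative blinfun_apply (v' x)) (at x)) \<and>
           continuous_on S v' \<and>
           (\<forall>x\<in>S. v' x \<in> DLs) \<and> continuous_on S (\<lambda>x. Ls (v' x)) \<and>
           (\<forall>x\<in>S. ereal (\<rho> * v x) = ereal (blinfun_apply (Ls (v' x)) x) + H (v' x)))"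

end

theory Submission
  imports Defs
begin


lemma bern_lt1:
  fixes t g :: real assumes "t \<ge> 0" "0 < g" "g < 1"
  shows "t powr (1-g) \<le> (1-g)*t + g"
proof (cases "t = 0")
  case True then show ?thesis using assms by simp
next
  case False
  then show ?thesis using Youngs_inequality_0[of "1-g" g t 1] assms by simp
qed

lemma bern_gt1:
  fixes t g :: real assumes "t > 0" "g > 1"
  shows "t powr (1-g) \<ge> (1-g)*t + g"
proof -
  have "t powr (1-g) = exp ((1-g) * ln t)" using assms by (simp add: powr_def)
  also have "\<dots> \<ge> 1 + (1-g)*ln t" by (rule exp_ge_add_one_self)
  finally have a: "t powr (1-g) \<ge> 1 + (1-g)*ln t" .
  have "ln t \<le> t - 1" using ln_le_minus_one assms by auto
  then have "(1-g)*ln t \<ge> (1-g)*(t-1)" using assms by (intro mult_left_mono_neg) auto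
  then show ?thesis using a by (simp add: algebra_simps)
qed

lemma pw_ineq:
  fixes y a f g :: real
  assumes g: "g > 0" "g \<noteq> 1" and a: "a > 0" and f: "f > 0" and y: "y \<ge> 0" "g > 1 \<longrightarrow> y > 0"
  shows "y powr (1-g) * f / (1-g) - a*y \<le> g/(1-g) * (f powr (1/g) * a powr ((g-1)/g))"
proof -
  define s where "s = (f/a) powr (1/g)"
  have s0: "s > 0" using a f by (simp add: s_def)
  have sg: "s powr g = f/a" using a f g by (simp add: s_def powr_powr)
  have s1: "s powr (1-g) = s * a / f"
    using sg s0 a f by (simp add: powr_diff)
  have K: "f powr (1/g) * a powr ((g-1)/g) = a * s"
  proof -
    have "(g-1)/g = 1 - 1/g" using g by (simp add: field_simps)
    then have "a powr ((g-1)/g) = a / a powr (1/g)" using a by (simp add: powr_diff)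
    then show ?thesis using a f by (simp add: s_def powr_divide)
  qed
  define t where "t = y / s"
  have yt: "y = t * s" using s0 by (simp add: t_def)
  have t0: "t \<ge> 0" using y s0 by (simp add: t_def)
  have yp: "y powr (1-g) = t powr (1-g) * (s * a / f)"
    using yt t0 s0 s1 by (simp add: powr_mult)
  have P: "y powr (1-g) * f = a * s * t powr (1-g)" using yp f by (simp add: field_simps)
  have P2: "a * y = a * s * t" using yt by simp
  have L: "y powr (1-g) * f / (1-g) - a*y = a * s * (t powr (1-g) / (1-g) - t)"
    unfolding P P2 by (simp add: field_simps)
  have "t powr (1-g) / (1-g) - t \<le> g/(1-g)"
  proof (cases "g < 1")
    case True
    have "t powr (1-g) - (1-g)*t \<le> g" using bern_lt1[OF t0 g(1) True] by simp
    then have "(t powr (1-g) - (1-g)*t)/(1-g) \<le> g/(1-g)" using True by (intro divide_right_mono) auto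
    then show ?thesis using True by (simp add: diff_divide_distrib)
  next
    case False
    then have g1: "g > 1" using g by simp
    have "y > 0" using y g1 by simp
    then have "t > 0" using s0 unfolding t_def by simp
    then have "t powr (1-g) - (1-g)*t \<ge> g" using bern_gt1 g1 by force
    then have "(t powr (1-g) - (1-g)*t)/(1-g) \<le> g/(1-g)" using g1 by (intro divide_right_mono_neg) auto
    then show ?thesis using g1 by (simp add: diff_divide_distrib)
  qed
  then have "a * s * (t powr (1-g) / (1-g) - t) \<le> a * s * (g/(1-g))"
    using a s0 by (intro mult_left_mono) auto
  then show ?thesis using L K by (simp add: mult.commute)
qed

lemma pw_eq:
  fixes a f g :: real
  assumes g: "g > 0" "g \<noteq> 1" and a: "a > 0" and f: "f > 0"
  shows "((f/a) powr (1/g)) powr (1-g) * f = f powr (1/g) * a powr ((g-1)/g)"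
    and "a * (f/a) powr (1/g) = f powr (1/g) * a powr ((g-1)/g)"
proof -
  define s where "s = (f/a) powr (1/g)"
  have s0: "s > 0" using a f by (simp add: s_def)
  have sg: "s powr g = f/a" using a f g by (simp add: s_def powr_powr)
  have s1: "s powr (1-g) = s * a / f"
    using sg s0 a f by (simp add: powr_diff)
  have K: "f powr (1/g) * a powr ((g-1)/g) = a * s"
  proof -
    have "(g-1)/g = 1 - 1/g" using g by (simp add: field_simps)
    then have "a powr ((g-1)/g) = a / a powr (1/g)" using a by (simp add: powr_diff)
    then show ?thesis using a f by (simp add: s_def powr_divide)
  qed
  show "((f/a) powr (1/g)) powr (1-g) * f = f powr (1/g) * a powr ((g-1)/g)"
    using K s1 f by (simp add: s_def[symmetric])
  show "a * (f/a) powr (1/g) = f powr (1/g) * a powr ((g-1)/g)"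
    using K by (simp add: s_def[symmetric])
qed



lemma H_compute:
  fixes \<mu> :: "'d measure" and E :: "'x \<Rightarrow> 'd \<Rightarrow> real" and Xn :: "'x \<Rightarrow> bool"
    and N :: "'x \<Rightarrow> 'x" and b :: "'x \<Rightarrow> real" and \<gamma> c :: real
  assumes g: "\<gamma> > 0" "\<gamma> \<noteq> 1" and c: "c > 0"
   and Emeas[measurable]: "\<And>x. E x \<in> borel_measurable \<mu>"
   and meas[measurable]: "\<eta> \<in> borel_measurable \<mu>" "f \<in> borel_measurable \<mu>" "b0 \<in> borel_measurable \<mu>"
   and pos: "\<forall>\<theta>\<in>space \<mu>. \<eta> \<theta> > 0" "\<forall>\<theta>\<in>space \<mu>. f \<theta> > 0" "AE \<theta> in \<mu>. b0 \<theta> > 0"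
   and NE: "\<And>z. AE \<theta> in \<mu>. E (N z) \<theta> = \<eta> \<theta> * E z \<theta>"
   and bd: "\<And>x. integrable \<mu> (\<lambda>\<theta>. E x \<theta> * b0 \<theta>) \<and> b x = (\<integral>\<theta>. E x \<theta> * b0 \<theta> \<partial>\<mu>)"
   and Xn: "\<And>z. Xn z \<Longrightarrow> AE \<theta> in \<mu>. E z \<theta> \<ge> 0"
   and Kint: "integrable \<mu> (\<lambda>\<theta>. f \<theta> powr (1/\<gamma>) * (\<eta> \<theta> * b0 \<theta>) powr ((\<gamma>-1)/\<gamma>))"
   and zs: "\<exists>z. Xn z \<and> (AE \<theta> in \<mu>. E z \<theta> = (f \<theta> / (c * \<eta> \<theta> * b0 \<theta>)) powr (1/\<gamma>))"
  shows "(SUP z \<in> {z. Xn z}. Uop \<gamma> \<mu> E f z - ereal (c * b (N z)))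
        = ereal (\<gamma>/(1-\<gamma>) * (c powr ((\<gamma>-1)/\<gamma>) *
             (\<integral>\<theta>. f \<theta> powr (1/\<gamma>) * (\<eta> \<theta> * b0 \<theta>) powr ((\<gamma>-1)/\<gamma>) \<partial>\<mu>)))"
proof -
  define Kb where "Kb \<theta> = f \<theta> powr (1/\<gamma>) * (\<eta> \<theta> * b0 \<theta>) powr ((\<gamma>-1)/\<gamma>)" for \<theta>
  define K where "K \<theta> = f \<theta> powr (1/\<gamma>) * (c * \<eta> \<theta> * b0 \<theta>) powr ((\<gamma>-1)/\<gamma>)" for \<theta>
  define r where "r = (\<gamma>-1)/\<gamma>"
  have [measurable]: "K \<in> borel_measurable \<mu>" "Kb \<in> borel_measurable \<mu>"
    unfolding K_def Kb_def by measurable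
  have K0: "K \<theta> \<ge> 0" for \<theta> by (simp add: K_def)
  have hK: "AE \<theta> in \<mu>. K \<theta> = c powr r * Kb \<theta>"
    using pos(3)
  proof (rule AE_mp, intro AE_I2 impI)
    fix \<theta> assume "\<theta> \<in> space \<mu>" "b0 \<theta> > 0"
    then have "\<eta> \<theta> * b0 \<theta> \<ge> 0" using pos by (simp add: less_imp_le)
    then show "K \<theta> = c powr r * Kb \<theta>" using c
      unfolding K_def Kb_def r_def by (simp add: powr_mult mult.assoc)
  qed
  have Kbint: "integrable \<mu> Kb" using Kint unfolding Kb_def by simp
  have Kint2: "integrable \<mu> K"
    using integrable_cong_AE[OF _ _ hK] Kbint by simp
  have intK: "(\<integral>\<theta>. K \<theta> \<partial>\<mu>) = c powr r * (\<integral>\<theta>. Kb \<theta> \<partial>\<mu>)"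
    using integral_cong_AE[OF _ _ hK] by simp
  have bN: "integrable \<mu> (\<lambda>\<theta>. c * \<eta> \<theta> * b0 \<theta> * E z \<theta>) \<and>
            c * b (N z) = (\<integral>\<theta>. c * \<eta> \<theta> * b0 \<theta> * E z \<theta> \<partial>\<mu>)" for z
  proof -
    have ae: "AE \<theta> in \<mu>. c * (E (N z) \<theta> * b0 \<theta>) = c * \<eta> \<theta> * b0 \<theta> * E z \<theta>"
      using NE[of z] by eventually_elim simp
    have i1: "integrable \<mu> (\<lambda>\<theta>. c * (E (N z) \<theta> * b0 \<theta>))" using bd[of "N z"] by simp
    show ?thesis
      using integrable_cong_AE[OF _ _ ae] integral_cong_AE[OF _ _ ae] i1 bd[of "N z"] by simp
  qed
  have apos: "AE \<theta> in \<mu>. c * \<eta> \<theta> * b0 \<theta> > 0"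
    using AE_space pos(3) by eventually_elim (use pos c in auto)
  define RHS where "RHS = \<gamma>/(1-\<gamma>) * (\<integral>\<theta>. K \<theta> \<partial>\<mu>)"
  have upper: "Uop \<gamma> \<mu> E f z - ereal (c * b (N z)) \<le> ereal RHS" if "Xn z" for z
  proof -
    have z0: "AE \<theta> in \<mu>. E z \<theta> \<ge> 0" using Xn that .
    have pw: "E z \<theta> powr (1-\<gamma>) * f \<theta> / (1-\<gamma>) - (c * \<eta> \<theta> * b0 \<theta>) * E z \<theta> \<le> \<gamma>/(1-\<gamma>) * K \<theta>"
      if "\<theta> \<in> space \<mu>" "c * \<eta> \<theta> * b0 \<theta> > 0" "E z \<theta> \<ge> 0" "\<gamma> > 1 \<longrightarrow> E z \<theta> > 0" for \<theta>
      using pw_ineq[OF g that(2) _ that(3,4), of "f \<theta>"] pos(2) that(1) unfolding K_def by simp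
    have bNi: "integrable \<mu> (\<lambda>\<theta>. c * \<eta> \<theta> * b0 \<theta> * E z \<theta>)" using bN by blast
    show ?thesis
    proof (cases "\<gamma> < 1")
      case True
      have "(\<integral>\<^sup>+\<theta>. ennreal (E z \<theta> powr (1 - \<gamma>) * f \<theta> / (1 - \<gamma>)) \<partial>\<mu>)
          \<le> (\<integral>\<^sup>+\<theta>. ennreal (c * \<eta> \<theta> * b0 \<theta> * E z \<theta> + \<gamma>/(1-\<gamma>) * K \<theta>) \<partial>\<mu>)"
      proof (rule nn_integral_mono_AE)
        show "AE \<theta> in \<mu>. ennreal (E z \<theta> powr (1 - \<gamma>) * f \<theta> / (1 - \<gamma>))
          \<le> ennreal (c * \<eta> \<theta> * b0 \<theta> * E z \<theta> + \<gamma>/(1-\<gamma>) * K \<theta>)"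
          using AE_space apos z0
        proof eventually_elim
          case (elim \<theta>)
          then show ?case using pw[of \<theta>] True by (intro ennreal_leI) (simp add: algebra_simps)
        qed
      qed
      also have "\<dots> = ennreal (\<integral>\<theta>. (c * \<eta> \<theta> * b0 \<theta> * E z \<theta> + \<gamma>/(1-\<gamma>) * K \<theta>) \<partial>\<mu>)"
      proof (rule nn_integral_eq_integral)
        show "integrable \<mu> (\<lambda>\<theta>. c * \<eta> \<theta> * b0 \<theta> * E z \<theta> + \<gamma>/(1-\<gamma>) * K \<theta>)"
          using bNi Kint2 by simp
        show "AE \<theta> in \<mu>. 0 \<le> c * \<eta> \<theta> * b0 \<theta> * E z \<theta> + \<gamma>/(1-\<gamma>) * K \<theta>"
          using apos z0 by eventually_elim (use K0 True g in simp)
      qed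
      also have "(\<integral>\<theta>. (c * \<eta> \<theta> * b0 \<theta> * E z \<theta> + \<gamma>/(1-\<gamma>) * K \<theta>) \<partial>\<mu>) = c * b (N z) + RHS"
        using bNi Kint2 bN[of z] unfolding RHS_def by simp
      finally have le: "(\<integral>\<^sup>+\<theta>. ennreal (E z \<theta> powr (1 - \<gamma>) * f \<theta> / (1 - \<gamma>)) \<partial>\<mu>) \<le> ennreal (c * b (N z) + RHS)" .
      have cb0: "c * b (N z) \<ge> 0"
        using bN[of z] apos z0 by (auto intro!: integral_nonneg_AE elim: AE_mp)
      have R0: "RHS \<ge> 0" unfolding RHS_def using True g K0 by (auto intro!: integral_nonneg_AE)
      have "Uop \<gamma> \<mu> E f z \<le> ereal (c * b (N z) + RHS)"
        using le cb0 R0 True unfolding Uop_def by (simp add: less_eq_ennreal.rep_eq plus_ennreal.rep_eq)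
      then show ?thesis by (simp add: ereal_minus_le_iff add.commute)
    next
      case False
      then have g1: "\<gamma> > 1" using g by simp
      define G where "G \<theta> = (if E z \<theta> > 0 then ennreal (E z \<theta> powr (1 - \<gamma>) * f \<theta> / (\<gamma> - 1)) else \<infinity>)" for \<theta>
      have [measurable]: "G \<in> borel_measurable \<mu>" unfolding G_def by measurable
      have "ennreal (- RHS) = (\<integral>\<^sup>+\<theta>. ennreal (\<gamma>/(\<gamma>-1) * K \<theta>) \<partial>\<mu>)"
      proof -
        have "(\<integral>\<^sup>+\<theta>. ennreal (\<gamma>/(\<gamma>-1) * K \<theta>) \<partial>\<mu>) = ennreal (\<integral>\<theta>. \<gamma>/(\<gamma>-1) * K \<theta> \<partial>\<mu>)"
          using Kint2 g1 K0 by (intro nn_integral_eq_integral) auto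
        moreover have "(\<integral>\<theta>. \<gamma>/(\<gamma>-1) * K \<theta> \<partial>\<mu>) = - RHS"
          unfolding RHS_def using g1 by (simp add: field_simps)
        ultimately show ?thesis by simp
      qed
      also have "\<dots> \<le> (\<integral>\<^sup>+\<theta>. (G \<theta> + ennreal (c * \<eta> \<theta> * b0 \<theta> * E z \<theta>)) \<partial>\<mu>)"
      proof (rule nn_integral_mono_AE)
        show "AE \<theta> in \<mu>. ennreal (\<gamma>/(\<gamma>-1) * K \<theta>) \<le> G \<theta> + ennreal (c * \<eta> \<theta> * b0 \<theta> * E z \<theta>)"
          using AE_space apos z0
        proof eventually_elim
          case (elim \<theta>)
          show ?case
          proof (cases "E z \<theta> > 0")
            case True
            have "E z \<theta> powr (1-\<gamma>) * f \<theta> / (1-\<gamma>) - (c * \<eta> \<theta> * b0 \<theta>) * E z \<theta> \<le> \<gamma>/(1-\<gamma>) * K \<theta>"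
              using pw[of \<theta>] elim True by simp
            then have "\<gamma>/(\<gamma>-1) * K \<theta> \<le> E z \<theta> powr (1 - \<gamma>) * f \<theta> / (\<gamma> - 1) + c * \<eta> \<theta> * b0 \<theta> * E z \<theta>"
              using g1 by (simp add: field_simps)
            then have "ennreal (\<gamma>/(\<gamma>-1) * K \<theta>) \<le> ennreal (E z \<theta> powr (1 - \<gamma>) * f \<theta> / (\<gamma> - 1) + c * \<eta> \<theta> * b0 \<theta> * E z \<theta>)"
              by (rule ennreal_leI)
            also have "\<dots> = G \<theta> + ennreal (c * \<eta> \<theta> * b0 \<theta> * E z \<theta>)"
            proof -
              have "f \<theta> > 0" using elim pos by auto
              then have "E z \<theta> powr (1 - \<gamma>) * f \<theta> / (\<gamma> - 1) \<ge> 0" using g1 by simp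
              moreover have "c * \<eta> \<theta> * b0 \<theta> * E z \<theta> \<ge> 0" using elim True by simp
              ultimately show ?thesis unfolding G_def using True by (simp add: ennreal_plus)
            qed
            finally show ?thesis .
          qed (simp add: G_def)
        qed
      qed
      also have "\<dots> = (\<integral>\<^sup>+\<theta>. G \<theta> \<partial>\<mu>) + (\<integral>\<^sup>+\<theta>. ennreal (c * \<eta> \<theta> * b0 \<theta> * E z \<theta>) \<partial>\<mu>)"
        by (rule nn_integral_add) auto
      also have "(\<integral>\<^sup>+\<theta>. ennreal (c * \<eta> \<theta> * b0 \<theta> * E z \<theta>) \<partial>\<mu>) = ennreal (c * b (N z))"
        using bN[of z] apos z0 by (auto intro!: nn_integral_eq_integral elim: AE_mp)
      finally have le: "ennreal (- RHS) \<le> (\<integral>\<^sup>+\<theta>. G \<theta> \<partial>\<mu>) + ennreal (c * b (N z))" .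
      have cb0: "c * b (N z) \<ge> 0"
        using bN[of z] apos z0 by (auto intro!: integral_nonneg_AE elim: AE_mp)
      have R0: "- RHS \<ge> 0" unfolding RHS_def using g1 K0 by (auto intro!: integral_nonneg_AE simp: field_simps)
      have "ereal (- RHS) \<le> enn2ereal (\<integral>\<^sup>+\<theta>. G \<theta> \<partial>\<mu>) + ereal (c * b (N z))"
        using le cb0 R0 by (simp add: less_eq_ennreal.rep_eq plus_ennreal.rep_eq)
      moreover have "Uop \<gamma> \<mu> E f z = - enn2ereal (\<integral>\<^sup>+\<theta>. G \<theta> \<partial>\<mu>)"
        unfolding Uop_def G_def using g1 by simp
      ultimately show ?thesis
        by (cases "enn2ereal (\<integral>\<^sup>+\<theta>. G \<theta> \<partial>\<mu>)") (auto simp: algebra_simps)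
    qed
  qed
  have attain: "\<exists>z. Xn z \<and> Uop \<gamma> \<mu> E f z - ereal (c * b (N z)) = ereal RHS"
  proof -
    obtain z where z: "Xn z" and zE: "AE \<theta> in \<mu>. E z \<theta> = (f \<theta> / (c * \<eta> \<theta> * b0 \<theta>)) powr (1/\<gamma>)"
      using zs by blast
    have e1: "AE \<theta> in \<mu>. E z \<theta> powr (1-\<gamma>) * f \<theta> = K \<theta> \<and> c * \<eta> \<theta> * b0 \<theta> * E z \<theta> = K \<theta> \<and> E z \<theta> > 0"
      using AE_space apos zE
    proof eventually_elim
      case (elim \<theta>)
      then have f0: "f \<theta> > 0" using pos by auto
      have nz: "c \<noteq> 0" "\<eta> \<theta> \<noteq> 0" "b0 \<theta> \<noteq> 0" using elim(2) by auto
      show ?case using pw_eq[OF g elim(2) f0] elim f0 nz unfolding K_def by simp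
    qed
    have cbK: "c * b (N z) = (\<integral>\<theta>. K \<theta> \<partial>\<mu>)"
      using bN[of z] integral_cong_AE[of "\<lambda>\<theta>. c * \<eta> \<theta> * b0 \<theta> * E z \<theta>" \<mu> K] e1 by (auto elim: AE_mp)
    show ?thesis
    proof (cases "\<gamma> < 1")
      case True
      have "(\<integral>\<^sup>+\<theta>. ennreal (E z \<theta> powr (1 - \<gamma>) * f \<theta> / (1 - \<gamma>)) \<partial>\<mu>)
          = (\<integral>\<^sup>+\<theta>. ennreal (K \<theta> / (1 - \<gamma>)) \<partial>\<mu>)"
        using e1 by (intro nn_integral_cong_AE) (auto elim: AE_mp)
      also have "\<dots> = ennreal (\<integral>\<theta>. K \<theta> / (1 - \<gamma>) \<partial>\<mu>)"
        using Kint2 K0 True by (intro nn_integral_eq_integral) auto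
      finally have "Uop \<gamma> \<mu> E f z = ereal ((\<integral>\<theta>. K \<theta> \<partial>\<mu>) / (1 - \<gamma>))"
        unfolding Uop_def using True K0 by (simp add: integral_nonneg_AE)
      then show ?thesis using z cbK True unfolding RHS_def by (auto simp: field_simps)
    next
      case False
      then have g1: "\<gamma> > 1" using g by simp
      have "(\<integral>\<^sup>+\<theta>. (if E z \<theta> > 0 then ennreal (E z \<theta> powr (1 - \<gamma>) * f \<theta> / (\<gamma> - 1)) else \<infinity>) \<partial>\<mu>)
          = (\<integral>\<^sup>+\<theta>. ennreal (K \<theta> / (\<gamma> - 1)) \<partial>\<mu>)"
        using e1 by (intro nn_integral_cong_AE) (auto elim: AE_mp)
      also have "\<dots> = ennreal (\<integral>\<theta>. K \<theta> / (\<gamma> - 1) \<partial>\<mu>)"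
        using Kint2 K0 g1 by (intro nn_integral_eq_integral) auto
      finally have "Uop \<gamma> \<mu> E f z = - ereal ((\<integral>\<theta>. K \<theta> \<partial>\<mu>) / (\<gamma> - 1))"
        unfolding Uop_def using g1 K0 by (simp add: integral_nonneg_AE)
      then show ?thesis using z cbK g1 unfolding RHS_def by (auto simp: field_simps)
    qed
  qed
  have "(SUP z \<in> {z. Xn z}. Uop \<gamma> \<mu> E f z - ereal (c * b (N z))) = ereal RHS"
  proof (rule antisym)
    show "(SUP z \<in> {z. Xn z}. Uop \<gamma> \<mu> E f z - ereal (c * b (N z))) \<le> ereal RHS"
      using upper by (intro SUP_least) auto
    obtain z where "Xn z" "Uop \<gamma> \<mu> E f z - ereal (c * b (N z)) = ereal RHS" using attain by blast
    then show "ereal RHS \<le> (SUP z \<in> {z. Xn z}. Uop \<gamma> \<mu> E f z - ereal (c * b (N z)))"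
      by (metis (mono_tags, lifting) SUP_upper mem_Collect_eq)
  qed
  then show ?thesis unfolding RHS_def intK Kb_def r_def by simp
qed



lemma powr_K_eq:
  fixes f e b g :: real assumes "f > 0" "e > 0" "b > 0" "g > 0"
  shows "(f / (e * b)) powr (1/g) * e * b = f powr (1/g) * (e * b) powr ((g-1)/g)"
proof -
  have "(g-1)/g = 1 - 1/g" using assms by (simp add: field_simps)
  then have "(e*b) powr ((g-1)/g) = (e*b) / (e*b) powr (1/g)" using assms by (simp add: powr_diff)
  then show ?thesis using assms by (simp add: powr_divide)
qed

lemma C_facts:
  fixes \<mu> :: "'d::metric_space measure" and E :: "'x::banach \<Rightarrow> 'd \<Rightarrow> real"
  assumes model: "C_model \<mu> E"
    and eta_pos: "\<forall>\<theta>\<in>space \<mu>. \<eta> \<theta> > 0" and f_pos: "\<forall>\<theta>\<in>space \<mu>. f \<theta> > 0"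
    and gamma: "\<gamma> > 0"
    and b0_density: "\<forall>x. integrable \<mu> (\<lambda>\<theta>. E x \<theta> * b0 \<theta>) \<and>
                         blinfun_apply b0s x = (\<integral>\<theta>. E x \<theta> * b0 \<theta> \<partial>\<mu>)"
    and A_iv: "continuous_on (space \<mu>) b0 \<and> (\<forall>\<theta>\<in>space \<mu>. b0 \<theta> > 0) \<and>
                        continuous_on (space \<mu>) \<eta> \<and> continuous_on (space \<mu>) f"
  shows "(\<forall>x. E x \<in> borel_measurable \<mu>) \<and>
         (\<forall>z. AE \<theta> in \<mu>. E (Nop True \<mu> E \<eta> z) \<theta> = \<eta> \<theta> * E z \<theta>) \<and>
         (\<forall>z. Xnonneg True \<mu> E z \<longrightarrow> (AE \<theta> in \<mu>. E z \<theta> \<ge> 0)) \<and>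
         (AE \<theta> in \<mu>. b0 \<theta> > 0) \<and>
         integrable \<mu> (\<lambda>\<theta>. f \<theta> powr (1/\<gamma>) * (\<eta> \<theta> * b0 \<theta>) powr ((\<gamma>-1)/\<gamma>)) \<and>
         (\<forall>c>0. \<exists>z. Xnonneg True \<mu> E z \<and> (AE \<theta> in \<mu>. E z \<theta> = (f \<theta> / (c * \<eta> \<theta> * b0 \<theta>)) powr (1/\<gamma>)))"
proof (intro conjI allI impI)
  have sets: "sets \<mu> = sets (restrict_space borel (space \<mu>))"
    and cont: "\<And>x. continuous_on (space \<mu>) (E x)"
    and surj: "\<And>g. continuous_on (space \<mu>) g \<Longrightarrow> \<exists>x. \<forall>\<theta>\<in>space \<mu>. E x \<theta> = g \<theta>"
    using model unfolding C_model_def by auto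
  show "E x \<in> borel_measurable \<mu>" for x
    using borel_measurable_continuous_on_restrict[OF cont[of x]] measurable_cong_sets[OF sets refl, of borel] by metis
  show "AE \<theta> in \<mu>. E (Nop True \<mu> E \<eta> z) \<theta> = \<eta> \<theta> * E z \<theta>" for z
  proof -
    have "\<exists>y. agree True \<mu> (E y) (\<lambda>\<theta>. \<eta> \<theta> * E z \<theta>)"
      using surj[of "\<lambda>\<theta>. \<eta> \<theta> * E z \<theta>"] A_iv cont[of z] unfolding agree_def
      by (auto intro: continuous_on_mult)
    then have "agree True \<mu> (E (Nop True \<mu> E \<eta> z)) (\<lambda>\<theta>. \<eta> \<theta> * E z \<theta>)"
      unfolding Nop_def by (rule someI_ex)
    then show ?thesis unfolding agree_def by (intro AE_I2) auto
  qed
  show "AE \<theta> in \<mu>. E z \<theta> \<ge> 0" if "Xnonneg True \<mu> E z" for z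
    using that unfolding Xnonneg_def by (intro AE_I2) auto
  show "AE \<theta> in \<mu>. b0 \<theta> > 0" using A_iv by (intro AE_I2) auto
  show "integrable \<mu> (\<lambda>\<theta>. f \<theta> powr (1/\<gamma>) * (\<eta> \<theta> * b0 \<theta>) powr ((\<gamma>-1)/\<gamma>))"
  proof -
    have "continuous_on (space \<mu>) (\<lambda>\<theta>. (f \<theta> / (\<eta> \<theta> * b0 \<theta>)) powr (1/\<gamma>) * \<eta> \<theta>)"
      using A_iv eta_pos f_pos
      by (intro continuous_intros continuous_on_powr') (auto intro!: divide_pos_pos)
    then obtain x where x: "\<forall>\<theta>\<in>space \<mu>. E x \<theta> = (f \<theta> / (\<eta> \<theta> * b0 \<theta>)) powr (1/\<gamma>) * \<eta> \<theta>"
      using surj by blast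
    have "integrable \<mu> (\<lambda>\<theta>. E x \<theta> * b0 \<theta>)" using b0_density by blast
    moreover have "\<forall>\<theta>\<in>space \<mu>. E x \<theta> * b0 \<theta> = f \<theta> powr (1/\<gamma>) * (\<eta> \<theta> * b0 \<theta>) powr ((\<gamma>-1)/\<gamma>)"
      using x powr_K_eq eta_pos f_pos A_iv gamma by simp
    ultimately show ?thesis using Bochner_Integration.integrable_cong[of \<mu> \<mu> "\<lambda>\<theta>. E x \<theta> * b0 \<theta>"] by simp
  qed
  show "\<exists>z. Xnonneg True \<mu> E z \<and> (AE \<theta> in \<mu>. E z \<theta> = (f \<theta> / (c * \<eta> \<theta> * b0 \<theta>)) powr (1/\<gamma>))"
    if c: "c > 0" for c
  proof -
    have "continuous_on (space \<mu>) (\<lambda>\<theta>. (f \<theta> / (c * \<eta> \<theta> * b0 \<theta>)) powr (1/\<gamma>))"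
      using A_iv eta_pos f_pos c
      by (intro continuous_intros continuous_on_powr') (auto intro!: divide_pos_pos)
    then obtain x where x: "\<forall>\<theta>\<in>space \<mu>. E x \<theta> = (f \<theta> / (c * \<eta> \<theta> * b0 \<theta>)) powr (1/\<gamma>)"
      using surj by blast
    then show ?thesis unfolding Xnonneg_def by (intro exI[of _ x]) (auto intro: AE_I2)
  qed
qed



lemma Lp_facts:
  fixes \<mu> :: "'d::metric_space measure" and E :: "'x::banach \<Rightarrow> 'd \<Rightarrow> real"
  assumes model: "Lp_model p \<mu> E"
    and eta_meas[measurable]: "\<eta> \<in> borel_measurable \<mu>" and eta_pos: "\<forall>\<theta>\<in>space \<mu>. \<eta> \<theta> > 0"
    and f_meas[measurable]: "f \<in> borel_measurable \<mu>" and f_pos: "\<forall>\<theta>\<in>space \<mu>. f \<theta> > 0"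
    and b0_meas[measurable]: "b0 \<in> borel_measurable \<mu>"
    and gamma: "\<gamma> > 0"
    and b0_density: "\<forall>x. integrable \<mu> (\<lambda>\<theta>. E x \<theta> * b0 \<theta>) \<and>
                         blinfun_apply b0s x = (\<integral>\<theta>. E x \<theta> * b0 \<theta> \<partial>\<mu>)"
    and Xpp: "b0s \<in> Xstar_pp False \<mu> E"
    and A_v: "(\<exists>C. AE \<theta> in \<mu>. \<bar>\<eta> \<theta>\<bar> \<le> C) \<and> (\<exists>C. AE \<theta> in \<mu>. \<bar>f \<theta>\<bar> \<le> C) \<and>
        integrable \<mu> (\<lambda>\<theta>. f \<theta> powr (1 / \<gamma>) * (\<eta> \<theta> * b0 \<theta>) powr ((\<gamma> - 1) / \<gamma>)) \<and>
        integrable \<mu> (\<lambda>\<theta>. (f \<theta> / (\<eta> \<theta> * b0 \<theta>)) powr (p / \<gamma>))"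
  shows "(\<forall>x. E x \<in> borel_measurable \<mu>) \<and>
         (\<forall>z. AE \<theta> in \<mu>. E (Nop False \<mu> E \<eta> z) \<theta> = \<eta> \<theta> * E z \<theta>) \<and>
         (\<forall>z. Xnonneg False \<mu> E z \<longrightarrow> (AE \<theta> in \<mu>. E z \<theta> \<ge> 0)) \<and>
         (AE \<theta> in \<mu>. b0 \<theta> > 0) \<and>
         integrable \<mu> (\<lambda>\<theta>. f \<theta> powr (1/\<gamma>) * (\<eta> \<theta> * b0 \<theta>) powr ((\<gamma>-1)/\<gamma>)) \<and>
         (\<forall>c>0. \<exists>z. Xnonneg False \<mu> E z \<and> (AE \<theta> in \<mu>. E z \<theta> = (f \<theta> / (c * \<eta> \<theta> * b0 \<theta>)) powr (1/\<gamma>)))"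
proof -
  have p1: "p \<ge> 1" and sf: "sigma_finite_measure \<mu>"
    and Em[measurable]: "\<And>x. E x \<in> borel_measurable \<mu>"
    and Ei: "\<And>x. integrable \<mu> (\<lambda>\<theta>. \<bar>E x \<theta>\<bar> powr p)"
    and add: "\<And>x y. AE \<theta> in \<mu>. E (x + y) \<theta> = E x \<theta> + E y \<theta>"
    and surj: "\<And>g. g \<in> borel_measurable \<mu> \<Longrightarrow> integrable \<mu> (\<lambda>\<theta>. \<bar>g \<theta>\<bar> powr p) \<Longrightarrow> \<exists>x. AE \<theta> in \<mu>. E x \<theta> = g \<theta>"
    using model unfolding Lp_model_def by auto
  have F2: "AE \<theta> in \<mu>. E (Nop False \<mu> E \<eta> z) \<theta> = \<eta> \<theta> * E z \<theta>" for z
  proof -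
    obtain C where C: "AE \<theta> in \<mu>. \<bar>\<eta> \<theta>\<bar> \<le> C" using A_v by blast
    have "integrable \<mu> (\<lambda>\<theta>. \<bar>\<eta> \<theta> * E z \<theta>\<bar> powr p)"
    proof (rule Bochner_Integration.integrable_bound)
      show "integrable \<mu> (\<lambda>\<theta>. C powr p * \<bar>E z \<theta>\<bar> powr p)" using Ei[of z] by simp
      show "(\<lambda>\<theta>. \<bar>\<eta> \<theta> * E z \<theta>\<bar> powr p) \<in> borel_measurable \<mu>" by measurable
      show "AE \<theta> in \<mu>. norm (\<bar>\<eta> \<theta> * E z \<theta>\<bar> powr p) \<le> norm (C powr p * \<bar>E z \<theta>\<bar> powr p)"
        using C
      proof eventually_elim
        case (elim \<theta>)
        have "\<bar>\<eta> \<theta>\<bar> powr p \<le> C powr p" using elim p1 by (intro powr_mono2) auto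
        then show ?case
          by (simp add: abs_mult powr_mult mult_right_mono)
      qed
    qed
    then obtain y where "AE \<theta> in \<mu>. E y \<theta> = \<eta> \<theta> * E z \<theta>" using surj[of "\<lambda>\<theta>. \<eta> \<theta> * E z \<theta>"] by auto
    then have "\<exists>y. agree False \<mu> (E y) (\<lambda>\<theta>. \<eta> \<theta> * E z \<theta>)" unfolding agree_def by auto
    then have "agree False \<mu> (E (Nop False \<mu> E \<eta> z)) (\<lambda>\<theta>. \<eta> \<theta> * E z \<theta>)"
      unfolding Nop_def by (rule someI_ex)
    then show ?thesis unfolding agree_def by simp
  qed
  have F4: "AE \<theta> in \<mu>. b0 \<theta> > 0"
  proof (rule ccontr)
    assume nAE: "\<not> (AE \<theta> in \<mu>. b0 \<theta> > 0)"
    define A where "A = {\<theta>\<in>space \<mu>. \<not> b0 \<theta> > 0}"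
    have Am: "A \<in> sets \<mu>" unfolding A_def by measurable
    have Apos: "emeasure \<mu> A \<noteq> 0" using nAE AE_iff_measurable[OF Am] A_def by auto
    obtain B where Bm: "B \<in> sets \<mu>" and BA: "B \<subseteq> A" and Bfin: "emeasure \<mu> B < \<infinity>" and Bpos: "emeasure \<mu> B > 0"
    proof (cases "emeasure \<mu> A = \<infinity>")
      case True
      then show ?thesis using sigma_finite_measure.approx_PInf_emeasure_with_finite[OF sf Am True, of 0] that
        by (metis ennreal_0 ennreal_0)
    next
      case False
      then show ?thesis using that[of A] Am Apos by (auto simp: less_top zero_less_iff_neq_zero)
    qed
    note [measurable] = Bm
    have "integrable \<mu> (\<lambda>\<theta>. \<bar>indicator B \<theta> :: real\<bar> powr p)"
    proof -
      have "(\<lambda>\<theta>. \<bar>indicator B \<theta> :: real\<bar> powr p) = indicator B"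
        using p1 by (auto simp: indicator_def fun_eq_iff)
      then show ?thesis using Bm Bfin by simp
    qed
    then obtain x where x: "AE \<theta> in \<mu>. E x \<theta> = indicator B \<theta>"
      using surj[of "indicator B"] Bm by auto
    have xn: "Xnonneg False \<mu> E x" unfolding Xnonneg_def using x by (auto elim: AE_mp)
    have "x \<noteq> 0"
    proof
      assume x0: "x = 0"
      have "AE \<theta> in \<mu>. E 0 \<theta> = 0" using add[of 0 0] by eventually_elim simp
      then have "AE \<theta> in \<mu>. (indicator B \<theta> :: real) = 0" using x by eventually_elim (simp add: x0)
      then have "AE \<theta> in \<mu>. \<theta> \<notin> B" by eventually_elim (simp add: indicator_def split: if_splits)
      then have "emeasure \<mu> B = 0" using AE_iff_measurable[OF Bm, of "\<lambda>\<theta>. \<theta> \<notin> B"] sets.sets_into_space[OF Bm] by auto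
      then show False using Bpos by simp
    qed
    then have gt: "blinfun_apply b0s x > 0" using Xpp xn unfolding Xstar_pp_def by blast
    have "blinfun_apply b0s x = (\<integral>\<theta>. indicator B \<theta> * b0 \<theta> \<partial>\<mu>)"
      proof -
      have [measurable]: "(\<lambda>\<theta>. indicator B \<theta> * b0 \<theta> :: real) \<in> borel_measurable \<mu>" by measurable
      show ?thesis using b0_density x by (auto intro!: integral_cong_AE elim: AE_mp)
    qed
    also have "\<dots> \<le> 0"
    proof -
      have "(\<integral>\<theta>. - (indicator B \<theta> * b0 \<theta>) \<partial>\<mu>) \<ge> 0"
        using BA unfolding A_def by (intro integral_nonneg_AE AE_I2) (auto simp: indicator_def)
      then show ?thesis by simp
    qed
    finally show False using gt by simp
  qed
  have F6: "\<exists>z. Xnonneg False \<mu> E z \<and> (AE \<theta> in \<mu>. E z \<theta> = (f \<theta> / (c * \<eta> \<theta> * b0 \<theta>)) powr (1/\<gamma>))"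
    if c: "c > 0" for c
  proof -
    have ae: "AE \<theta> in \<mu>. \<bar>(f \<theta> / (c * \<eta> \<theta> * b0 \<theta>)) powr (1/\<gamma>)\<bar> powr p
               = (1/c) powr (p/\<gamma>) * (f \<theta> / (\<eta> \<theta> * b0 \<theta>)) powr (p / \<gamma>)"
      using AE_space F4
    proof eventually_elim
      case (elim \<theta>)
      have eq: "f \<theta> / (c * \<eta> \<theta> * b0 \<theta>) = (1/c) * (f \<theta> / (\<eta> \<theta> * b0 \<theta>))" by simp
      have Y: "f \<theta> / (\<eta> \<theta> * b0 \<theta>) \<ge> 0" using elim eta_pos f_pos by (auto intro!: divide_nonneg_pos)
      have "\<bar>(f \<theta> / (c * \<eta> \<theta> * b0 \<theta>)) powr (1/\<gamma>)\<bar> powr p = (f \<theta> / (c * \<eta> \<theta> * b0 \<theta>)) powr (p/\<gamma>)"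
        by (simp add: powr_powr)
      also have "\<dots> = ((1/c) * (f \<theta> / (\<eta> \<theta> * b0 \<theta>))) powr (p/\<gamma>)" using eq by (rule arg_cong)
      also have "\<dots> = (1/c) powr (p/\<gamma>) * (f \<theta> / (\<eta> \<theta> * b0 \<theta>)) powr (p/\<gamma>)"
        by (rule powr_mult)
      finally show ?case .
    qed
    have "integrable \<mu> (\<lambda>\<theta>. (1/c) powr (p/\<gamma>) * (f \<theta> / (\<eta> \<theta> * b0 \<theta>)) powr (p / \<gamma>))"
      using A_v by simp
    then have "integrable \<mu> (\<lambda>\<theta>. \<bar>(f \<theta> / (c * \<eta> \<theta> * b0 \<theta>)) powr (1/\<gamma>)\<bar> powr p)"
      using integrable_cong_AE[OF _ _ ae] by simp
    then obtain x where x: "AE \<theta> in \<mu>. E x \<theta> = (f \<theta> / (c * \<eta> \<theta> * b0 \<theta>)) powr (1/\<gamma>)"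
      using surj[of "\<lambda>\<theta>. (f \<theta> / (c * \<eta> \<theta> * b0 \<theta>)) powr (1/\<gamma>)"] by auto
    have "Xnonneg False \<mu> E x" unfolding Xnonneg_def using x by (auto elim: AE_mp)
    then show ?thesis using x by blast
  qed
  show ?thesis
    using Em F2 F4 F6 A_v unfolding Xnonneg_def by auto
qed



theorem proposition3p4:
  fixes \<mu> :: "'d::metric_space measure"
    and E :: "'x::banach \<Rightarrow> 'd \<Rightarrow> real"
    and isC :: bool and p :: real
    and T :: "real \<Rightarrow> ('x \<Rightarrow>\<^sub>L 'x)" and DL :: "'x set" and L :: "'x \<Rightarrow> 'x"
    and \<eta> f b0 :: "'d \<Rightarrow> real" and b0s :: "'x \<Rightarrow>\<^sub>L real"
    and \<gamma> \<rho> lam0 :: real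
  assumes model: "if isC then C_model \<mu> E else Lp_model p \<mu> E"
    and semigroup: "C0_semigroup T" and generator: "is_generator T DL L"
    and dense: "closure DL = UNIV" and closed_L: "closed {(x, L x) | x. x \<in> DL}"
    and positivity: "\<forall>t\<ge>0. blinfun_apply (T t) ` X_pp isC \<mu> E \<subseteq> X_pp isC \<mu> E"
    and eta_meas: "\<eta> \<in> borel_measurable \<mu>" and eta_pos: "\<forall>\<theta>\<in>space \<mu>. \<eta> \<theta> > 0"
    and f_meas: "f \<in> borel_measurable \<mu>" and f_pos: "\<forall>\<theta>\<in>space \<mu>. f \<theta> > 0"
    and gamma: "\<gamma> > 0" "\<gamma> \<noteq> 1" and rho: "\<rho> > 0"
    and b0_meas: "b0 \<in> borel_measurable \<mu>"
    and b0_density: "\<forall>x. integrable \<mu> (\<lambda>\<theta>. E x \<theta> * b0 \<theta>) \<and>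
                         blinfun_apply b0s x = (\<integral>\<theta>. E x \<theta> * b0 \<theta> \<partial>\<mu>)"
    and A_i: "b0s \<in> Xstar_pp isC \<mu> E" "b0s \<in> adj_dom DL L" "adj_op DL L b0s = lam0 *\<^sub>R b0s"
    and A_ii: "\<rho> > lam0 * (1 - \<gamma>)"
    and A_iii: "\<gamma> > 1 \<longrightarrow> (\<exists>C. AE \<theta> in \<mu>. \<bar>b0 \<theta> powr (1 - \<gamma>) / f \<theta>\<bar> \<le> C)"
    and A_iv: "isC \<longrightarrow> continuous_on (space \<mu>) b0 \<and> (\<forall>\<theta>\<in>space \<mu>. b0 \<theta> > 0) \<and>
                        continuous_on (space \<mu>) \<eta> \<and> continuous_on (space \<mu>) f"
    and A_v: "\<not> isC \<longrightarrow> (\<exists>C. AE \<theta> in \<mu>. \<bar>\<eta> \<theta>\<bar> \<le> C) \<and> (\<exists>C. AE \<theta> in \<mu>. \<bar>f \<theta>\<bar> \<le> C) \<and>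
        integrable \<mu> (\<lambda>\<theta>. f \<theta> powr (1 / \<gamma>) * (\<eta> \<theta> * b0 \<theta>) powr ((\<gamma> - 1) / \<gamma>)) \<and>
        integrable \<mu> (\<lambda>\<theta>. (f \<theta> / (\<eta> \<theta> * b0 \<theta>)) powr (p / \<gamma>))"
  shows "HJB_classical_solution {x. blinfun_apply b0s x > 0}
           (\<lambda>x. (\<gamma> powr \<gamma> *
                   ((\<integral>\<theta>. f \<theta> powr (1 / \<gamma>) * (\<eta> \<theta> * b0 \<theta>) powr ((\<gamma> - 1) / \<gamma>) \<partial>\<mu>)
                      / (\<rho> - lam0 * (1 - \<gamma>))) powr \<gamma>)
                 * blinfun_apply b0s x powr (1 - \<gamma>) / (1 - \<gamma>))
           \<rho> (adj_dom DL L) (adj_op DL L) (Hop isC \<mu> E \<gamma> f \<eta>)"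
proof -
  define I where "I = (\<integral>\<theta>. f \<theta> powr (1 / \<gamma>) * (\<eta> \<theta> * b0 \<theta>) powr ((\<gamma> - 1) / \<gamma>) \<partial>\<mu>)"
  define D where "D = \<rho> - lam0 * (1 - \<gamma>)"
  define \<alpha> where "\<alpha> = \<gamma> powr \<gamma> * (I / D) powr \<gamma>"
  define S where "S = {x. blinfun_apply b0s x > 0}"
  have D0: "D > 0" using A_ii unfolding D_def by simp
  have facts: "(\<forall>x. E x \<in> borel_measurable \<mu>) \<and>
         (\<forall>z. AE \<theta> in \<mu>. E (Nop isC \<mu> E \<eta> z) \<theta> = \<eta> \<theta> * E z \<theta>) \<and>
         (\<forall>z. Xnonneg isC \<mu> E z \<longrightarrow> (AE \<theta> in \<mu>. E z \<theta> \<ge> 0)) \<and>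
         (AE \<theta> in \<mu>. b0 \<theta> > 0) \<and>
         integrable \<mu> (\<lambda>\<theta>. f \<theta> powr (1/\<gamma>) * (\<eta> \<theta> * b0 \<theta>) powr ((\<gamma>-1)/\<gamma>)) \<and>
         (\<forall>c>0. \<exists>z. Xnonneg isC \<mu> E z \<and> (AE \<theta> in \<mu>. E z \<theta> = (f \<theta> / (c * \<eta> \<theta> * b0 \<theta>)) powr (1/\<gamma>)))"
  proof (cases isC)
    case True
    then show ?thesis
      using C_facts[of \<mu> E \<eta> f \<gamma> b0 b0s] model eta_pos f_pos gamma b0_density A_iv by simp
  next
    case False
    then show ?thesis
      using Lp_facts[of p \<mu> E \<eta> f b0 \<gamma> b0s] model eta_meas eta_pos f_meas f_pos b0_meas gamma b0_density A_i(1) A_v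
      by simp
  qed
  then have Em: "\<And>x. E x \<in> borel_measurable \<mu>"
    and NE: "\<And>z. AE \<theta> in \<mu>. E (Nop isC \<mu> E \<eta> z) \<theta> = \<eta> \<theta> * E z \<theta>"
    and Xn: "\<And>z. Xnonneg isC \<mu> E z \<Longrightarrow> AE \<theta> in \<mu>. E z \<theta> \<ge> 0"
    and b0pos: "AE \<theta> in \<mu>. b0 \<theta> > 0"
    and Kint: "integrable \<mu> (\<lambda>\<theta>. f \<theta> powr (1/\<gamma>) * (\<eta> \<theta> * b0 \<theta>) powr ((\<gamma>-1)/\<gamma>))"
    and zs: "\<And>c. c > 0 \<Longrightarrow> \<exists>z. Xnonneg isC \<mu> E z \<and> (AE \<theta> in \<mu>. E z \<theta> = (f \<theta> / (c * \<eta> \<theta> * b0 \<theta>)) powr (1/\<gamma>))"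
    by auto
  have Hc: "Hop isC \<mu> E \<gamma> f \<eta> (c *\<^sub>R b0s) = ereal (\<gamma>/(1-\<gamma>) * (c powr ((\<gamma>-1)/\<gamma>) * I))" if c: "c > 0" for c
  proof -
    have "Hop isC \<mu> E \<gamma> f \<eta> (c *\<^sub>R b0s) =
       (SUP z \<in> {z. Xnonneg isC \<mu> E z}. Uop \<gamma> \<mu> E f z - ereal (c * blinfun_apply b0s (Nop isC \<mu> E \<eta> z)))"
      unfolding Hop_def by (simp add: scaleR_blinfun.rep_eq)
    also have "\<dots> = ereal (\<gamma>/(1-\<gamma>) * (c powr ((\<gamma>-1)/\<gamma>) * I))"
      unfolding I_def
      by (rule H_compute[OF gamma c Em eta_meas f_meas b0_meas eta_pos f_pos b0pos NE _ Xn Kint zs[OF c]])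
        (use b0_density in auto)
    finally show ?thesis .
  qed
  obtain \<psi>0 where psi0: "\<forall>x\<in>DL. blinfun_apply b0s (L x) = blinfun_apply \<psi>0 x"
    using A_i(2) unfolding adj_dom_def by blast
  have dense_eq: "a = b" if "\<forall>x\<in>DL. blinfun_apply a x = blinfun_apply b x" for a b :: "'x \<Rightarrow>\<^sub>L real"
  proof -
    have cl: "closed {x. blinfun_apply a x = blinfun_apply b x}"
      by (intro closed_Collect_eq) (auto intro: continuous_intros)
    have "closure DL \<subseteq> {x. blinfun_apply a x = blinfun_apply b x}"
      using that by (intro closure_minimal[OF _ cl]) auto
    then show ?thesis using dense by (auto intro: blinfun_eqI)
  qed
  have adj_eq: "adj_op DL L \<phi> = \<psi>" if "\<forall>x\<in>DL. blinfun_apply \<phi> (L x) = blinfun_apply \<psi> x" for \<phi> \<psi>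
    unfolding adj_op_def
  proof (rule the1_equality)
    show "\<exists>!\<psi>. \<forall>x\<in>DL. blinfun_apply \<phi> (L x) = blinfun_apply \<psi> x"
      using that dense_eq by (metis (no_types, lifting))
  qed (rule that)
  have "adj_op DL L b0s = \<psi>0" using adj_eq psi0 by blast
  then have adjL: "\<forall>x\<in>DL. blinfun_apply b0s (L x) = lam0 * blinfun_apply b0s x"
    using psi0 A_i(3) by (auto simp: scaleR_blinfun.rep_eq)
  have adj_c: "c *\<^sub>R b0s \<in> adj_dom DL L \<and> adj_op DL L (c *\<^sub>R b0s) = (c * lam0) *\<^sub>R b0s" for c
  proof -
    have "\<forall>x\<in>DL. blinfun_apply (c *\<^sub>R b0s) (L x) = blinfun_apply ((c * lam0) *\<^sub>R b0s) x"
      using adjL by (simp add: scaleR_blinfun.rep_eq)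
    then show ?thesis using adj_eq unfolding adj_dom_def by blast
  qed
  define v' where "v' x = (\<alpha> * blinfun_apply b0s x powr (-\<gamma>)) *\<^sub>R b0s" for x
  have openS: "open S" unfolding S_def
    by (intro open_Collect_less) (auto intro: continuous_intros)
  have deriv: "((\<lambda>y. \<alpha> * blinfun_apply b0s y powr (1 - \<gamma>) / (1 - \<gamma>)) has_derivative blinfun_apply (v' x)) (at x)"
    if "x \<in> S" for x
  proof -
    have s0: "blinfun_apply b0s x > 0" using that unfolding S_def by simp
    have d1: "((\<lambda>t. \<alpha> * t powr (1 - \<gamma>) / (1 - \<gamma>)) has_real_derivative \<alpha> * blinfun_apply b0s x powr (-\<gamma>)) (at (blinfun_apply b0s x))"
    proof -
      have "((\<lambda>t. t powr (1 - \<gamma>)) has_real_derivative (1-\<gamma>) * blinfun_apply b0s x powr (1 - \<gamma> - 1)) (at (blinfun_apply b0s x))"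
        by (rule has_real_derivative_powr[OF s0])
      then have "((\<lambda>t. \<alpha> / (1 - \<gamma>) * t powr (1 - \<gamma>)) has_real_derivative \<alpha> / (1 - \<gamma>) * ((1-\<gamma>) * blinfun_apply b0s x powr (1 - \<gamma> - 1))) (at (blinfun_apply b0s x))"
        by (rule DERIV_cmult)
      moreover have "\<alpha> / (1 - \<gamma>) * ((1-\<gamma>) * blinfun_apply b0s x powr (1 - \<gamma> - 1)) = \<alpha> * blinfun_apply b0s x powr (-\<gamma>)"
        using gamma(2) by simp
      moreover have "(\<lambda>t. \<alpha> / (1 - \<gamma>) * t powr (1 - \<gamma>)) = (\<lambda>t. \<alpha> * t powr (1 - \<gamma>) / (1 - \<gamma>))"
        by (simp add: fun_eq_iff)
      ultimately show ?thesis by metis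
    qed
    have d2: "(blinfun_apply b0s has_derivative blinfun_apply b0s) (at x)"
      by (rule bounded_linear_imp_has_derivative) (rule blinfun.bounded_linear_right)
    have "((\<lambda>y. \<alpha> * blinfun_apply b0s y powr (1 - \<gamma>) / (1 - \<gamma>)) has_derivative
             (\<lambda>h. blinfun_apply b0s h * (\<alpha> * blinfun_apply b0s x powr (-\<gamma>)))) (at x)"
      using DERIV_compose_FDERIV[OF d1 d2] by simp
    moreover have "(\<lambda>h. blinfun_apply b0s h * (\<alpha> * blinfun_apply b0s x powr (-\<gamma>))) = blinfun_apply (v' x)"
      unfolding v'_def by (auto simp: fun_eq_iff scaleR_blinfun.rep_eq)
    ultimately show ?thesis by simp
  qed
  have contv': "continuous_on S v'"
    unfolding v'_def S_def
    by (intro continuous_intros continuous_on_powr') (auto intro: continuous_intros)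
  have contLv': "continuous_on S (\<lambda>x. adj_op DL L (v' x))"
  proof -
    have "continuous_on S (\<lambda>x. ((\<alpha> * blinfun_apply b0s x powr (-\<gamma>)) * lam0) *\<^sub>R b0s)"
      unfolding S_def
      by (intro continuous_intros continuous_on_powr') (auto intro: continuous_intros)
    then show ?thesis unfolding v'_def using adj_c by simp
  qed
  have Ipos: "I > 0" if "x \<in> S" for x
  proof -
    have I0: "I \<ge> 0" unfolding I_def by (intro integral_nonneg_AE AE_I2) simp
    have "I \<noteq> 0"
    proof
      assume "I = 0"
      then have "AE \<theta> in \<mu>. f \<theta> powr (1 / \<gamma>) * (\<eta> \<theta> * b0 \<theta>) powr ((\<gamma> - 1) / \<gamma>) = 0"
        unfolding I_def using integral_nonneg_eq_0_iff_AE[OF Kint] by simp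
      then have "AE \<theta> in \<mu>. False"
        using AE_space b0pos by eventually_elim (use eta_pos f_pos in auto)
      then have "AE \<theta> in \<mu>. E x \<theta> * b0 \<theta> = 0" by eventually_elim simp
      then have "blinfun_apply b0s x = 0" using b0_density integral_eq_zero_AE by metis
      then show False using that unfolding S_def by simp
    qed
    then show ?thesis using I0 by simp
  qed
  have eqn: "ereal (\<rho> * (\<alpha> * blinfun_apply b0s x powr (1 - \<gamma>) / (1 - \<gamma>))) =
      ereal (blinfun_apply (adj_op DL L (v' x)) x) + Hop isC \<mu> E \<gamma> f \<eta> (v' x)" if "x \<in> S" for x
  proof -
    define s where "s = blinfun_apply b0s x"
    have s0: "s > 0" using that unfolding S_def s_def by simp
    have I0: "I > 0" using Ipos[OF that] .
    define q where "q = \<gamma> * I / D"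
    have q0: "q > 0" using I0 D0 gamma unfolding q_def by simp
    have aq: "\<alpha> = q powr \<gamma>" unfolding \<alpha>_def q_def by (simp add: powr_mult[symmetric] times_divide_eq_right)
    have a0: "\<alpha> > 0" using aq q0 by simp
    define c where "c = \<alpha> * s powr (-\<gamma>)"
    have c0: "c > 0" using a0 s0 unfolding c_def by simp
    define r where "r = (\<gamma> - 1) / \<gamma>"
    have cs: "c * s = \<alpha> * s powr (1 - \<gamma>)"
    proof -
      have "s powr (-\<gamma>) * s = s powr (1 - \<gamma>)" using powr_add[of s "-\<gamma>" 1] s0 by simp
      then show ?thesis unfolding c_def by (simp add: mult.assoc)
    qed
    have cr: "c powr r = \<alpha> powr r * s powr (1 - \<gamma>)"
    proof -
      have "c powr r = \<alpha> powr r * (s powr (-\<gamma>)) powr r" unfolding c_def by (rule powr_mult)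
      also have "(s powr (-\<gamma>)) powr r = s powr (1 - \<gamma>)"
      proof -
        have "-\<gamma> * ((\<gamma> - 1) / \<gamma>) = 1 - \<gamma>" using gamma by (simp add: field_simps)
        then show ?thesis unfolding r_def by (simp add: powr_powr)
      qed
      finally show ?thesis .
    qed
    have ar: "\<alpha> powr r * I = \<alpha> * D / \<gamma>"
    proof -
      have "\<alpha> powr r = q powr (\<gamma> - 1)" unfolding aq r_def using gamma by (simp add: powr_powr)
      also have "\<dots> = \<alpha> / q" unfolding aq using q0 by (simp add: powr_diff)
      finally show ?thesis unfolding q_def using I0 D0 gamma by (simp add: field_simps)
    qed
    have v'c: "v' x = c *\<^sub>R b0s" unfolding v'_def c_def s_def by simp
    have H: "Hop isC \<mu> E \<gamma> f \<eta> (v' x) = ereal (\<gamma>/(1-\<gamma>) * (c powr r * I))"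
      unfolding v'c r_def using Hc[OF c0] by simp
    have A: "blinfun_apply (adj_op DL L (v' x)) x = c * lam0 * s"
      unfolding v'c using adj_c[of c] by (simp add: scaleR_blinfun.rep_eq s_def)
    have "\<rho> * (\<alpha> * s powr (1 - \<gamma>) / (1 - \<gamma>)) = c * lam0 * s + \<gamma>/(1-\<gamma>) * (c powr r * I)"
    proof -
      have e1: "\<gamma>/(1-\<gamma>) * (c powr r * I) = s powr (1 - \<gamma>) * \<alpha> * D / (1-\<gamma>)"
        using cr ar gamma by (simp add: field_simps)
      have e2: "c * lam0 * s = lam0 * \<alpha> * s powr (1 - \<gamma>)" using cs by simp
      have g1: "1 - \<gamma> \<noteq> 0" using gamma by simp
      show ?thesis unfolding e1 e2 D_def using g1 by (simp add: field_simps)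
    qed
    then show ?thesis unfolding H A s_def by simp
  qed
  show ?thesis
    unfolding HJB_classical_solution_def S_def[symmetric] I_def[symmetric] D_def[symmetric] \<alpha>_def[symmetric]
    using openS deriv contv' contLv' eqn adj_c
    by (intro conjI exI[of _ v']) (auto simp: v'_def)
qed


end
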